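(* For all formulas $p,q,r,t\in F(V)$ the following hold in the logic $\mathrm{sq}\L^*$ (where $\vdash$ denotes $\vdash_{\mathrm{sq}\L^*}$): (1) if $\vdash p\leftrightarrow q$, then $\vdash\neg p\leftrightarrow\neg q$; (2) if $\vdash p\leftrightarrow q$ and $\vdash r\leftrightarrow t$, then $\vdash(p\to r)\leftrightarrow(q\to t)$; (3) if $\vdash p\leftrightarrow q$ and $\vdash q\leftrightarrow r$, then $\vdash p\leftrightarrow r$; (4) $\vdash\neg(p\to q)\leftrightarrow(\neg p\to\neg q)$; (5) $\vdash p\to p$; (6) if $\vdash p_1\leftrightarrow r_1$, then $\vdash p\leftrightarrow r$, where $p_1$ is a subformula of $p$ and $r$ is obtained by replacing $p_1$ in $p$ with $r_1$; (7) $\vdash(p\to p)\leftrightarrow(q\to q)$; (8) $\vdash p\leftrightarrow\neg\neg p$; (9) $\vdash(\neg p\to q)\leftrightarrow(\neg q\to p)$; (10) $\vdash(\neg p)^+\leftrightarrow\neg p^-$ and $\vdash(\neg p)^-\leftrightarrow\neg p^+$; (11) $\vdash(p\vee q)\leftrightarrow(q\vee p)$.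
   Context: Let $V$ be a set of propositional variables and $F(V)$ the set of formulas built from $V$ and the constant $1$ using the binary connective $\to$ and the unary connective $\neg$ ($\neg$ binds more tightly than $\to$). Abbreviations: $p^+:=(p\to 1)\to 1$, $p^-:=(p\to\neg 1)\to\neg 1$ (these bind more tightly than $\neg$, so $\neg p^-$ is $\neg(p^-)$), $p\vee q:=((p^+\to q^+)^+\to(\neg p)^-)\to((q^-\to p^-)^-\to p^-)$; "$p\leftrightarrow q$" stands for the two formulas $p\to q$ and $q\to p$, so an axiom $p\leftrightarrow q$ means both are axioms and $\vdash p\leftrightarrow q$ means both are derivable. The logic $\mathrm{sq}\L^*$ has axiom schemas (for all $p,q,r\in F(V)$): (Q1) $(p\to q)\leftrightarrow(\neg q\to\neg p)$; (Q2) $1\leftrightarrow((1\to p)\to 1)$; (Q3) $p\leftrightarrow((q\to q)\to p)$; (Q4) $(p\to q)\leftrightarrow((q^+\to p^-)\to(p^+\to q^-))$; (Q5) $\neg(p\to q)\leftrightarrow(q\to p)$; (Q6) $(p\to(\neg p\to q))^+\leftrightarrow(p^+\to(\neg p^+\to q^+))$; (Q7) $(p\to(q\vee r))\leftrightarrow((p\to r)\vee(p\to q))$; (Q8) $(p\vee(q\vee r))\leftrightarrow((p\vee q)\vee r)$; (Q9) $((p\to 1)\to((q\to 1)\to r))\to((q\to 1)\to((p\to 1)\to r))$; (Q10) $p\to 1$; and rules (for all $p,q,r,t$): (qMP) from $(r\to r)\to p$ and $(r\to r)\to(p\to q)$ infer $(r\to r)\to q$; (Reg) from $p$ infer $(r\to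 r)\to p$; (AReg1) from $(r\to r)\to(p\to q)$ infer $p\to q$; (AReg2) from $(r\to r)\to\neg(p\to q)$ infer $\neg(p\to q)$; (AReg3) from $(r\to r)\to\neg 1$ infer $\neg 1$; (AReg4) from $(r\to r)\to 1$ infer $1$; (Inv1) from $p$ infer $\neg\neg p$; (Inv2) from $\neg\neg p$ infer $p$; (Flat) from $p$ and $\neg 1$ infer $\neg p$; (R2$'$) from $p\to q$ and $r\to t$ infer $(q\to r)\to(p\to t)$; (R3$'$) from $(r\to r)\to p$ infer $p^-$. $\vdash_{\mathrm{sq}\L^*}q$ means there is a finite sequence of formulas ending with $q$ in which each member is an axiom instance or follows from earlier members by a rule. *)

theory Defs
  imports Main
begin

datatype 'v fm = Var 'v | One | Imp "'v fm" "'v fm" | Neg "'v fm"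

definition pl :: "'v fm \<Rightarrow> 'v fm" where
  "pl p = Imp (Imp p One) One"

definition mi :: "'v fm \<Rightarrow> 'v fm" where
  "mi p = Imp (Imp p (Neg One)) (Neg One)"

definition disj :: "'v fm \<Rightarrow> 'v fm \<Rightarrow> 'v fm" where
  "disj p q = Imp (Imp (pl (Imp (pl p) (pl q))) (mi (Neg p)))
                  (Imp (mi (Imp (mi q) (mi p))) (mi p))"

inductive deriv :: "'v fm \<Rightarrow> bool" where
  Q1a: "deriv (Imp (Imp p q) (Imp (Neg q) (Neg p)))"
| Q1b: "deriv (Imp (Imp (Neg q) (Neg p)) (Imp p q))"
| Q2a: "deriv (Imp One (Imp (Imp One p) One))"
| Q2b: "deriv (Imp (Imp (Imp One p) One) One)"
| Q3a: "deriv (Imp p (Imp (Imp q q) p))"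
| Q3b: "deriv (Imp (Imp (Imp q q) p) p)"
| Q4a: "deriv (Imp (Imp p q) (Imp (Imp (pl q) (mi p)) (Imp (pl p) (mi q))))"
| Q4b: "deriv (Imp (Imp (Imp (pl q) (mi p)) (Imp (pl p) (mi q))) (Imp p q))"
| Q5a: "deriv (Imp (Neg (Imp p q)) (Imp q p))"
| Q5b: "deriv (Imp (Imp q p) (Neg (Imp p q)))"
| Q6a: "deriv (Imp (pl (Imp p (Imp (Neg p) q))) (Imp (pl p) (Imp (Neg (pl p)) (pl q))))"
| Q6b: "deriv (Imp (Imp (pl p) (Imp (Neg (pl p)) (pl q))) (pl (Imp p (Imp (Neg p) q))))"
| Q7a: "deriv (Imp (Imp p (disj q r)) (disj (Imp p r) (Imp p q)))"
| Q7b: "deriv (Imp (disj (Imp p r) (Imp p q)) (Imp p (disj q r)))"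
| Q8a: "deriv (Imp (disj p (disj q r)) (disj (disj p q) r))"
| Q8b: "deriv (Imp (disj (disj p q) r) (disj p (disj q r)))"
| Q9: "deriv (Imp (Imp (Imp p One) (Imp (Imp q One) r)) (Imp (Imp q One) (Imp (Imp p One) r)))"
| Q10: "deriv (Imp p One)"
| qMP: "deriv (Imp (Imp r r) p) \<Longrightarrow> deriv (Imp (Imp r r) (Imp p q)) \<Longrightarrow> deriv (Imp (Imp r r) q)"
| Reg: "deriv p \<Longrightarrow> deriv (Imp (Imp r r) p)"
| AReg1: "deriv (Imp (Imp r r) (Imp p q)) \<Longrightarrow> deriv (Imp p q)"
| AReg2: "deriv (Imp (Imp r r) (Neg (Imp p q))) \<Longrightarrow> deriv (Neg (Imp p q))"
| AReg3: "deriv (Imp (Imp r r) (Neg One)) \<Longrightarrow> deriv (Neg One)"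
| AReg4: "deriv (Imp (Imp r r) One) \<Longrightarrow> deriv One"
| Inv1: "deriv p \<Longrightarrow> deriv (Neg (Neg p))"
| Inv2: "deriv (Neg (Neg p)) \<Longrightarrow> deriv p"
| Flat: "deriv p \<Longrightarrow> deriv (Neg One) \<Longrightarrow> deriv (Neg p)"
| R2': "deriv (Imp p q) \<Longrightarrow> deriv (Imp r t) \<Longrightarrow> deriv (Imp (Imp q r) (Imp p t))"
| R3': "deriv (Imp (Imp r r) p) \<Longrightarrow> deriv (mi p)"

definition deq :: "'v fm \<Rightarrow> 'v fm \<Rightarrow> bool" where
  "deq p q \<longleftrightarrow> deriv (Imp p q) \<and> deriv (Imp q p)"

text \<open>One-hole formula contexts, used to express replacement of an occurrence of a subformula.\<close>
datatype 'v ctx = Hole | ImpL "'v ctx" "'v fm" | ImpR "'v fm" "'v ctx" | NegC "'v ctx"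

fun plug :: "'v ctx \<Rightarrow> 'v fm \<Rightarrow> 'v fm" where
  "plug Hole x = x"
| "plug (ImpL c q) x = Imp (plug c x) q"
| "plug (ImpR q c) x = Imp q (plug c x)"
| "plug (NegC c) x = Neg (plug c x)"

end

theory Submission
  imports Defs
begin

lemma mpI: "deriv x \<Longrightarrow> deriv (Imp x (Imp a b)) \<Longrightarrow> deriv (Imp a b)"
proof -
  assume h1: "deriv x" and h2: "deriv (Imp x (Imp a b))"
  have "deriv (Imp (Imp One One) x)" using h1 by (rule Reg)
  moreover have "deriv (Imp (Imp One One) (Imp x (Imp a b)))" using h2 by (rule Reg)
  ultimately have "deriv (Imp (Imp One One) (Imp a b))" by (rule qMP)
  then show ?thesis by (rule AReg1)
qed

lemma refl: "deriv (Imp p p)"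
proof -
  have "deriv (Imp (Imp p p) (Imp (Imp p p) (Imp p p)))" by (rule Q3a)
  then have "deriv (Imp (Imp p p) (Imp p p))" by (rule AReg1)
  then show ?thesis by (rule AReg1)
qed

lemma trans: "deriv (Imp a b) \<Longrightarrow> deriv (Imp b c) \<Longrightarrow> deriv (Imp a c)"
  by (rule mpI[OF _ R2'[OF _ refl]])

lemma deq_refl: "deq p p" by (simp add: deq_def refl)
lemma deq_sym: "deq p q \<Longrightarrow> deq q p" by (auto simp: deq_def)
lemma deq_trans: "deq p q \<Longrightarrow> deq q r \<Longrightarrow> deq p r"
  by (auto simp: deq_def intro: trans)
lemma deq_Neg: "deq p q \<Longrightarrow> deq (Neg p) (Neg q)"
  by (auto simp: deq_def intro: mpI[OF _ Q1a])

lemma deq_Imp': "deq p q \<Longrightarrow> deq r t \<Longrightarrow> deq (Imp p r) (Imp q t)"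
proof -
  assume "deq p q" "deq r t"
  then have a: "deriv (Imp p q)" "deriv (Imp q p)" "deriv (Imp r t)" "deriv (Imp t r)"
    by (auto simp: deq_def)
  have "deriv (Imp (Imp p r) (Imp q t))" by (rule R2'[OF a(2) a(3)])
  moreover have "deriv (Imp (Imp q t) (Imp p r))" by (rule R2'[OF a(1) a(4)])
  ultimately show ?thesis by (simp add: deq_def)
qed

lemma Q3: "deq p (Imp (Imp q q) p)" by (simp add: deq_def Q3a Q3b)
lemma Q5: "deq (Neg (Imp p q)) (Imp q p)" by (simp add: deq_def Q5a Q5b)
lemma Q1: "deq (Imp p q) (Imp (Neg q) (Neg p))" by (simp add: deq_def Q1a Q1b)

lemma dn_imp: "deq (Neg (Neg (Imp x y))) (Imp x y)"
  by (meson Q5 deq_Neg deq_trans deq_sym)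

lemma dn: "deq p (Neg (Neg p))"
proof -
  have "deq p (Imp (Imp p p) p)" by (rule Q3)
  moreover have "deq (Imp (Imp p p) p) (Neg (Neg (Imp (Imp p p) p)))" by (rule deq_sym[OF dn_imp])
  moreover have "deq (Neg (Neg (Imp (Imp p p) p))) (Neg (Neg p))"
    by (rule deq_Neg[OF deq_Neg[OF deq_sym[OF Q3]]])
  ultimately show ?thesis by (meson deq_trans)
qed

lemma ctx: "deq p1 r1 \<Longrightarrow> deq (plug C p1) (plug C r1)"
  by (induction C) (auto intro: deq_Imp' deq_Neg deq_refl)

lemma deq_pl: "deq a b \<Longrightarrow> deq (pl a) (pl b)"
  unfolding pl_def by (intro deq_Imp' deq_refl)
lemma deq_mi: "deq a b \<Longrightarrow> deq (mi a) (mi b)"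
  unfolding mi_def by (intro deq_Imp' deq_refl)
lemma deq_disj: "deq a b \<Longrightarrow> deq c d \<Longrightarrow> deq (disj a c) (disj b d)"
  unfolding disj_def by (intro deq_Imp' deq_pl deq_mi deq_Neg deq_refl)

lemma disj_comm1: "deriv (Imp (disj q r) (disj r q))"
proof -
  let ?I = "Imp One One"
  have "deriv (Imp (disj q r) (Imp ?I (disj q r)))" by (rule Q3a)
  moreover have "deriv (Imp (Imp ?I (disj q r)) (disj (Imp ?I r) (Imp ?I q)))" by (rule Q7a)
  moreover have "deq (disj (Imp ?I r) (Imp ?I q)) (disj r q)"
    by (intro deq_disj deq_sym[OF Q3])
  ultimately show ?thesis unfolding deq_def disj_def by (meson trans)
qed

lemma pl_neg: "deq (pl (Neg p)) (Neg (mi p))"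
proof -
  have e1: "deq (Imp (Neg p) One) (Imp (Neg One) p)"
    by (meson Q1 deq_Imp' deq_refl deq_sym dn deq_trans)
  have e2: "deq (Imp (Imp (Neg One) p) One) (Imp (Neg One) (Imp p (Neg One)))"
    by (meson Q1 Q5 deq_Imp' deq_refl deq_sym dn deq_trans)
  have "deq (pl (Neg p)) (Imp (Imp (Neg One) p) One)"
    unfolding pl_def by (intro deq_Imp' e1 deq_refl)
  then have "deq (pl (Neg p)) (Imp (Neg One) (Imp p (Neg One)))" using e2 by (rule deq_trans)
  then show ?thesis unfolding mi_def by (meson Q5 deq_sym deq_trans)
qed

lemma mi_neg: "deq (mi (Neg p)) (Neg (pl p))"
proof -
  have e1: "deq (Imp (Neg p) (Neg One)) (Imp One p)"
    by (meson Q1 deq_sym)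
  have e2: "deq (Imp (Imp One p) (Neg One)) (Imp One (Imp p One))"
  proof -
    have "deq (Imp (Imp One p) (Neg One)) (Imp (Neg (Neg One)) (Neg (Imp One p)))" by (rule Q1)
    moreover have "deq (Imp (Neg (Neg One)) (Neg (Imp One p))) (Imp One (Imp p One))"
      by (intro deq_Imp' deq_sym[OF dn] Q5)
    ultimately show ?thesis by (rule deq_trans)
  qed
  have "deq (mi (Neg p)) (Imp (Imp One p) (Neg One))"
    unfolding mi_def by (intro deq_Imp' e1 deq_refl)
  then have "deq (mi (Neg p)) (Imp One (Imp p One))" using e2 by (rule deq_trans)
  then show ?thesis unfolding pl_def by (meson Q5 deq_sym deq_trans)
qed

lemma contra: "deriv (Imp (Imp (Neg a) b) (Imp (Neg b) a))"
proof -
  have "deq (Imp (Neg b) (Neg (Neg a))) (Imp (Neg b) a)"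
    by (intro deq_Imp' deq_refl deq_sym[OF dn])
  then show ?thesis
    unfolding deq_def by (meson Q1a trans)
qed

theorem proposition4p1:
  fixes p q r t p1 r1 :: "'v fm"
  shows
    "(deq p q \<longrightarrow> deq (Neg p) (Neg q))
   \<and> (deq p q \<and> deq r t \<longrightarrow> deq (Imp p r) (Imp q t))
   \<and> (deq p q \<and> deq q r \<longrightarrow> deq p r)
   \<and> deq (Neg (Imp p q)) (Imp (Neg p) (Neg q))
   \<and> deriv (Imp p p)
   \<and> (\<forall>C :: 'v ctx. deq p1 r1 \<longrightarrow> deq (plug C p1) (plug C r1))
   \<and> deq (Imp p p) (Imp q q)
   \<and> deq p (Neg (Neg p))
   \<and> deq (Imp (Neg p) q) (Imp (Neg q) p)
   \<and> deq (pl (Neg p)) (Neg (mi p)) \<and> deq (mi (Neg p)) (Neg (pl p))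
   \<and> deq (disj p q) (disj q p)"
proof (intro conjI impI allI)
  show "deq (Neg (Imp p q)) (Imp (Neg p) (Neg q))" using Q5 Q1 by (rule deq_trans)
  show "deq (Imp p p) (Imp q q)" unfolding deq_def
    using AReg1[OF Q3a[of "Imp q q" p]] AReg1[OF Q3a[of "Imp p p" q]] by simp
  show "deq (Imp (Neg p) q) (Imp (Neg q) p)" by (simp add: deq_def contra)
  show "deq (disj p q) (disj q p)" by (simp add: deq_def disj_comm1)
qed (auto intro: deq_Neg deq_Imp' deq_trans refl ctx dn pl_neg mi_neg)

end
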